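(* Let $(G,k)$ be an instance of Clique and let $(\mathcal{G},k',\ell)$ be the instance of Multistage Vertex Cover produced from $(G,k)$ by the construction described in the context. If $G$ contains a clique of size $k$, then $(\mathcal{G},k',\ell)$ is a yes-instance of Multistage Vertex Cover.
   Context: Multistage Vertex Cover: given a temporal graph $\mathcal{G}$, i.e. a sequence of layers (static graphs) $(G_1,\dots,G_\tau)$ on a common vertex set $V'$, and integers $k'\in\mathbb{N}$, $\ell\in\mathbb{N}_0$, decide whether there is $(S_1,\dots,S_\tau)$ with each $S_i\subseteq V'$ a vertex cover of $G_i$ of size at most $k'$ and $|S_i\triangle S_{i+1}|\le\ell$ for all $i<\tau$ ($\triangle$ = symmetric difference). Construction: let $G=(V,E)$ with $E=\{e_1,\dots,e_m\}$, $m=|E|$, and positive integer $k$. Let $K=\binom{k}{2}$, $k'=2K+k+1$, $\kappa=K+k+3$, $\tau=2m\kappa+1$, and $\ell=2$. The vertex set $V'$ contains $V\cup E$ (each edge of $G$ is also a vertex), the sets $U^t=\{u^t_1,\dots,u^t_K\}$ for $t\in\{1,\dots,\kappa+1\}$, the set $C=\{c_1,\dots,c_{\tau}\}$, and additional new leaf vertices introduced below. The layers $G_1,\dots,G_\tau$ have the following edges: (1) for every odd $i\in\{1,\dots,\tau\}$, in $G_i$ the vertex $c_i$ is the center of a star with $k'+1$ new leaf vertices; (2) for every $j\in\{0,\dots,\kappa\}$, in $G_{2mj+1}$ each vertex of $U^{j+1}$ is the center of a star with $k'+1$ new leaf vertices; (3) for every $j\in\{0,\dots,\kappa-1\}$ and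 $i\in\{1,\dots,2m+1\}$, in $G_{2mj+i}$ the vertex $u^{j+1}_x$ is adjacent to $u^{j+2}_x$ for every $x\in\{1,\dots,K\}$; (4) for every even $i\in\{1,\dots,\tau-1\}$, the edge $\{c_i,c_{i+1}\}$ is present in $G_i$ and in $G_{i+1}$; (5) for every $j\in\{0,\dots,\kappa-1\}$ and $i\in\{1,\dots,m\}$ with $e_i=\{v,w\}$, in $G_{2mj+2i}$ the vertex $c_{2mj+2i}$ is adjacent to the vertices $e_i$, $v$ and $w$. No other edges are present. The output is $(\mathcal{G}=(G_1,\dots,G_\tau),k',\ell)$. *)

theory Defs
  imports Main
begin

definition is_vertex_cover :: "'a set set \<Rightarrow> 'a set \<Rightarrow> bool" where
  "is_vertex_cover Es S \<longleftrightarrow> (\<forall>e\<in>Es. e \<inter> S \<noteq> {})"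

definition sym_diff :: "'a set \<Rightarrow> 'a set \<Rightarrow> 'a set" where
  "sym_diff A B = (A - B) \<union> (B - A)"

definition multistage_vc :: "'a set \<Rightarrow> nat \<Rightarrow> (nat \<Rightarrow> 'a set set) \<Rightarrow> nat \<Rightarrow> nat \<Rightarrow> bool" where
  "multistage_vc Vt tau Es k' l \<longleftrightarrow>
     (\<exists>S :: nat \<Rightarrow> 'a set.
        (\<forall>i\<in>{1..tau}. S i \<subseteq> Vt \<and> is_vertex_cover (Es i) (S i) \<and> card (S i) \<le> k') \<and>
        (\<forall>i\<in>{1..<tau}. card (sym_diff (S i) (S (Suc i))) \<le> l))"

text \<open>Vertices of the constructed temporal graph:
  OrigV v  : vertex v of G;
  EdgeV p  : the vertex for edge e_p (p in 1..m);
  U t x    : u^t_x;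
  Cv i     : c_i;
  LeafC i r: the r-th new leaf of the star centered at c_i in layer i (odd i);
  LeafU j x r : the r-th new leaf of the star centered at u^(j+1)_x in layer 2mj+1.\<close>

datatype 'v mvc_vertex =
    OrigV 'v
  | EdgeV nat
  | U nat nat
  | Cv nat
  | LeafC nat nat
  | LeafU nat nat nat

definition mvc_K :: "nat \<Rightarrow> nat" where "mvc_K k = k choose 2"
definition mvc_kprime :: "nat \<Rightarrow> nat" where "mvc_kprime k = 2 * mvc_K k + k + 1"
definition mvc_kappa :: "nat \<Rightarrow> nat" where "mvc_kappa k = mvc_K k + k + 3"
definition mvc_tau :: "'v set list \<Rightarrow> nat \<Rightarrow> nat" where
  "mvc_tau es k = 2 * length es * mvc_kappa k + 1"

text \<open>Edges of G are e_1, ..., e_m with e_p = es ! (p - 1).\<close>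

definition mvc_vertices :: "'v set \<Rightarrow> 'v set list \<Rightarrow> nat \<Rightarrow> 'v mvc_vertex set" where
  "mvc_vertices V es k =
     OrigV ` V \<union> EdgeV ` {1..length es}
     \<union> {U t x | t x. 1 \<le> t \<and> t \<le> mvc_kappa k + 1 \<and> 1 \<le> x \<and> x \<le> mvc_K k}
     \<union> Cv ` {1..mvc_tau es k}
     \<union> {LeafC i r | i r. 1 \<le> i \<and> i \<le> mvc_tau es k \<and> odd i \<and> 1 \<le> r \<and> r \<le> mvc_kprime k + 1}
     \<union> {LeafU j x r | j x r. j \<le> mvc_kappa k \<and> 1 \<le> x \<and> x \<le> mvc_K k
                         \<and> 1 \<le> r \<and> r \<le> mvc_kprime k + 1}"

definition mvc_layer :: "'v set list \<Rightarrow> nat \<Rightarrow> nat \<Rightarrow> 'v mvc_vertex set set" where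
  "mvc_layer es k i =
    (let m = length es; K = mvc_K k; k' = mvc_kprime k; \<kappa> = mvc_kappa k; \<tau> = mvc_tau es k in
     \<comment> \<open>(1)\<close>
     {{Cv i, LeafC i r} | r. odd i \<and> 1 \<le> r \<and> r \<le> k' + 1}
     \<comment> \<open>(2)\<close>
     \<union> {{U (j+1) x, LeafU j x r} | j x r. j \<le> \<kappa> \<and> i = 2*m*j + 1 \<and> 1 \<le> x \<and> x \<le> K
                                        \<and> 1 \<le> r \<and> r \<le> k' + 1}
     \<comment> \<open>(3)\<close>
     \<union> {{U (j+1) x, U (j+2) x} | j x. j < \<kappa> \<and> 2*m*j + 1 \<le> i \<and> i \<le> 2*m*j + (2*m+1)
                                   \<and> 1 \<le> x \<and> x \<le> K}
     \<comment> \<open>(4): edge {c_q, c_(q+1)} for even q in 1..tau-1 is present in G_q and G_(q+1)\<close>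
     \<union> {{Cv q, Cv (q+1)} | q. even q \<and> 1 \<le> q \<and> q \<le> \<tau> - 1 \<and> (i = q \<or> i = q + 1)}
     \<comment> \<open>(5)\<close>
     \<union> {{Cv i, y} | j p y. j < \<kappa> \<and> 1 \<le> p \<and> p \<le> m \<and> i = 2*m*j + 2*p
                         \<and> (y = EdgeV p \<or> (\<exists>v\<in>es ! (p - 1). y = OrigV v))})"

definition has_clique :: "'v set \<Rightarrow> 'v set list \<Rightarrow> nat \<Rightarrow> bool" where
  "has_clique V es k \<longleftrightarrow>
     (\<exists>C. C \<subseteq> V \<and> card C = k \<and> (\<forall>v\<in>C. \<forall>w\<in>C. v \<noteq> w \<longrightarrow> {v, w} \<in> set es))"

end

theory Submission
  imports Defs
begin

lemma uniq2:
  fixes m j j' p p' :: nat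
  assumes "2*m*j + 2*p = 2*m*j' + 2*p'" "1 \<le> p" "p \<le> m" "1 \<le> p'" "p' \<le> m"
  shows "j = j' \<and> p = p'"
proof -
  have e: "m*j + p = m*j' + p'" using assms(1) by simp
  have "\<not> j < j'"
  proof
    assume "j < j'" then have "m*(j+1) \<le> m*j'" by (intro mult_le_mono2) simp
    then show False using e assms by (simp add: algebra_simps)
  qed
  moreover have "\<not> j' < j"
  proof
    assume "j' < j" then have "m*(j'+1) \<le> m*j" by (intro mult_le_mono2) simp
    then show False using e assms by (simp add: algebra_simps)
  qed
  ultimately have "j = j'" by simp
  with e show ?thesis by simp
qed

lemma div_range:
  fixes a n j :: nat
  assumes "0 < n" "n*j \<le> a" "a < n*(j+2)"
  shows "a div n = j \<or> a div n = j+1"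
proof -
  have "j \<le> a div n" using assms by (simp add: less_eq_div_iff_mult_less_eq mult.commute)
  moreover have "a div n < j + 2" using assms by (simp add: div_less_iff_less_mult mult.commute)
  ultimately show ?thesis by linarith
qed

lemma div_exact:
  fixes a n j :: nat
  assumes "0 < n" "n*j \<le> a" "a < n*(j+1)"
  shows "a div n = j"
proof -
  have "j \<le> a div n" using assms by (simp add: less_eq_div_iff_mult_less_eq mult.commute)
  moreover have "a div n < j + 1" using assms by (simp add: div_less_iff_less_mult mult.commute)
  ultimately show ?thesis by linarith
qed

lemma div_step:
  fixes a n :: nat
  assumes "Suc a div n \<noteq> a div n"
  shows "n dvd Suc a"
  using assms by (metis div_Suc dvd_eq_mod_eq_0)

theorem lemma18:
  fixes V :: "'v set" and es :: "'v set list" and k :: nat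
  assumes "finite V"
    and "distinct es"
    and "\<forall>e\<in>set es. \<exists>v w. v \<in> V \<and> w \<in> V \<and> v \<noteq> w \<and> e = {v, w}"
    and "k > 0"
    and "has_clique V es k"
  shows "multistage_vc (mvc_vertices V es k) (mvc_tau es k) (mvc_layer es k) (mvc_kprime k) 2"
proof -
  obtain C where C: "C \<subseteq> V" "card C = k" "\<forall>v\<in>C. \<forall>w\<in>C. v \<noteq> w \<longrightarrow> {v, w} \<in> set es"
    using assms(5) unfolding has_clique_def by blast
  have finC: "finite C" using C(1) assms(1) finite_subset by blast
  define m where "m = length es"
  define K where "K = mvc_K k"
  define \<kappa> where "\<kappa> = mvc_kappa k"
  define \<tau> where "\<tau> = mvc_tau es k"
  have tau_eq: "\<tau> = 2*m*\<kappa> + 1" unfolding \<tau>_def mvc_tau_def m_def \<kappa>_def by simp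
  define P where "P = {p \<in> {1..m}. es ! (p - 1) \<subseteq> C}"
  have "{B. B \<subseteq> C \<and> card B = 2} \<subseteq> (\<lambda>p. es ! (p - 1)) ` P"
  proof
    fix B assume "B \<in> {B. B \<subseteq> C \<and> card B = 2}"
    then have B: "B \<subseteq> C" "card B = 2" by auto
    then obtain v w where vw: "B = {v, w}" "v \<noteq> w" by (meson card_2_iff)
    then have "B \<in> set es" using C(3) B(1) by auto
    then obtain n where n: "n < m" "es ! n = B" unfolding m_def by (metis in_set_conv_nth)
    then have "Suc n \<in> P" unfolding P_def using B by auto
    then show "B \<in> (\<lambda>p. es ! (p - 1)) ` P" using n by force
  qed
  moreover have finP: "finite P" unfolding P_def by simp
  ultimately have "card {B. B \<subseteq> C \<and> card B = 2} \<le> card ((\<lambda>p. es ! (p - 1)) ` P)"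
    by (intro card_mono finite_imageI)
  also have "\<dots> \<le> card P" using finP by (rule card_image_le)
  finally have "card {B. B \<subseteq> C \<and> card B = 2} \<le> card P" .
  then have KP: "card {1..K} \<le> card P" using n_subsets[OF finC, of 2] C(2)
    unfolding K_def mvc_K_def by simp
  obtain f where f0: "f ` {1..K} \<subseteq> P" "inj_on f {1..K}"
    using card_le_inj[OF _ finP KP] by auto
  have f: "\<And>x. x \<in> {1..K} \<Longrightarrow> 1 \<le> f x \<and> f x \<le> m \<and> es ! (f x - 1) \<subseteq> C"
  proof -
    fix x assume "x \<in> {1..K}"
    then have "f x \<in> P" using f0(1) by blast
    then show "1 \<le> f x \<and> f x \<le> m \<and> es ! (f x - 1) \<subseteq> C" unfolding P_def by auto
  qed
  have Km: "K \<le> m"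
  proof -
    have "card (f ` {1..K}) \<le> card {1..m}" by (rule card_mono) (use f in auto)
    then show ?thesis using card_image[OF f0(2)] by simp
  qed
  have mpos: "x \<in> {1..K} \<Longrightarrow> 0 < m" for x using Km by auto
  define sp where "sp i \<longleftrightarrow> (\<exists>x\<in>{1..K}. \<exists>j. i = 2*m*j + 2*f x)" for i
  define cc where "cc i = (if sp i then Suc i else i)" for i
  define t where "t x i = Suc ((i + 2*m - 2*f x - 1) div (2*m))" for x i
  define S where "S i = insert (Cv (cc i)) (OrigV ` C \<union> EdgeV ` f ` {1..K} \<union> (\<lambda>x. U (t x i) x) ` {1..K})" for i
  have sp_even: "sp i \<Longrightarrow> even i" for i unfolding sp_def by auto
  have T1: "t x i = j+1 \<or> t x i = j+2"
    if "x \<in> {1..K}" "2*m*j+1 \<le> i" "i \<le> 2*m*j+2*m+1" for x i j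
  proof -
    have fx: "1 \<le> f x" "f x \<le> m" using f[OF that(1)] by auto
    have "(i + 2*m - 2*f x - 1) div (2*m) = j \<or> (i + 2*m - 2*f x - 1) div (2*m) = j+1"
      apply (rule div_range) using mpos[OF that(1)] fx that by (auto simp: algebra_simps)
    then show ?thesis unfolding t_def by auto
  qed
  have T2: "t x i = j+1" if "x \<in> {1..K}" "i = 2*m*j+1" for x i j
  proof -
    have fx: "1 \<le> f x" "f x \<le> m" using f[OF that(1)] by auto
    have "(i + 2*m - 2*f x - 1) div (2*m) = j"
      apply (rule div_exact) using mpos[OF that(1)] fx that by (auto simp: algebra_simps)
    then show ?thesis unfolding t_def by auto
  qed
  have T3: "t x i \<le> \<kappa> + 1" if "x \<in> {1..K}" "1 \<le> i" "i \<le> \<tau>" for x i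
  proof -
    have fx: "1 \<le> f x" "f x \<le> m" using f[OF that(1)] by auto
    have "(i + 2*m - 2*f x - 1) div (2*m) < \<kappa> + 1"
      using mpos[OF that(1)] fx that tau_eq by (auto simp: div_less_iff_less_mult algebra_simps)
    then show ?thesis unfolding t_def by auto
  qed
  have T4: "\<exists>j. i = 2*m*j + 2*f x" if "x \<in> {1..K}" "1 \<le> i" "t x (Suc i) \<noteq> t x i" for x i
  proof -
    have fx: "1 \<le> f x" "f x \<le> m" using f[OF that(1)] by auto
    define a where "a = i + 2*m - 2*f x - 1"
    have a1: "Suc i + 2*m - 2*f x - 1 = Suc a" unfolding a_def using fx that(2) by simp
    have "Suc a div (2*m) \<noteq> a div (2*m)" using that(3) unfolding t_def a1 a_def by simp
    then have "2*m dvd Suc a" by (rule div_step)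
    then obtain q where q: "Suc a = 2*m*q" by blast
    have "q \<noteq> 0" using q by (metis mult_0_right nat.distinct(1))
    then obtain j where "q = Suc j" using not0_implies_Suc by blast
    then have "i = 2*m*j + 2*f x" using q fx that(2) unfolding a_def by (simp add: algebra_simps)
    then show ?thesis by blast
  qed
  have inS_U: "U (t x i) x \<in> S i" if "x \<in> {1..K}" for x i
    unfolding S_def using that by blast
  have H1: "Cv i \<in> S i" if "odd i" for i
    using sp_even that unfolding S_def cc_def by auto
  have H2: "U (j+1) x \<in> S i" if "x \<in> {1..K}" "i = 2*m*j+1" for x i j
    using inS_U[OF that(1), of i] T2[OF that] by simp
  have H3: "U (j+1) x \<in> S i \<or> U (j+2) x \<in> S i"
    if "x \<in> {1..K}" "2*m*j+1 \<le> i" "i \<le> 2*m*j+2*m+1" for x i j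
    using inS_U[OF that(1), of i] T1[OF that] by auto
  have H4: "Cv q \<in> S i \<or> Cv (q+1) \<in> S i" if "even q" "i = q \<or> i = q+1" for q i
  proof (cases "i = q")
    case True then show ?thesis unfolding S_def cc_def by auto
  next
    case False then have "i = q+1" using that by auto
    then show ?thesis using that(1) H1[of i] by auto
  qed
  have H5: "Cv i \<in> S i \<or> y \<in> S i"
    if "1 \<le> p" "p \<le> m" "i = 2*m*j+2*p" "y = EdgeV p \<or> (\<exists>v\<in>es ! (p - 1). y = OrigV v)" for p i j y
  proof (cases "sp i")
    case False then show ?thesis unfolding S_def cc_def by auto
  next
    case True
    then obtain x j' where x: "x \<in> {1..K}" "i = 2*m*j' + 2*f x" unfolding sp_def by blast
    have "f x = p" using uniq2[of m j' "f x" j p] x that f[OF x(1)] by auto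
    then have "y \<in> S i" using that(4) x(1) f[OF x(1)] unfolding S_def by auto
    then show ?thesis by blast
  qed
  have cover: "is_vertex_cover (mvc_layer es k i) (S i)" if "1 \<le> i" "i \<le> \<tau>" for i
    unfolding is_vertex_cover_def mvc_layer_def Let_def K_def[symmetric] m_def[symmetric]
      \<kappa>_def[symmetric] \<tau>_def[symmetric]
  proof (intro ballI)
    fix e assume e: "e \<in> {{Cv i, LeafC i r} |r. odd i \<and> 1 \<le> r \<and> r \<le> mvc_kprime k + 1} \<union>
           {{U (j + 1) x, LeafU j x r} |j x r.
            j \<le> \<kappa> \<and> i = 2 * m * j + 1 \<and> 1 \<le> x \<and> x \<le> K \<and> 1 \<le> r \<and> r \<le> mvc_kprime k + 1} \<union>
           {{U (j + 1) x, U (j + 2) x} |j x.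
            j < \<kappa> \<and> 2 * m * j + 1 \<le> i \<and> i \<le> 2 * m * j + (2 * m + 1) \<and> 1 \<le> x \<and> x \<le> K} \<union>
           {{Cv q, Cv (q + 1)} |q. even q \<and> 1 \<le> q \<and> q \<le> \<tau> - 1 \<and> (i = q \<or> i = q + 1)} \<union>
           {{Cv i, y} |j p y.
            j < \<kappa> \<and> 1 \<le> p \<and> p \<le> m \<and> i = 2 * m * j + 2 * p \<and> (y = EdgeV p \<or> (\<exists>v\<in>es ! (p - 1). y = OrigV v))}"
    show "e \<inter> S i \<noteq> {}"
      using e
    proof (elim UnE)
      assume "e \<in> {{Cv i, LeafC i r} |r. odd i \<and> 1 \<le> r \<and> r \<le> mvc_kprime k + 1}"
      then show ?thesis using H1 by blast
    next
      assume "e \<in> {{U (j + 1) x, LeafU j x r} |j x r.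
            j \<le> \<kappa> \<and> i = 2 * m * j + 1 \<and> 1 \<le> x \<and> x \<le> K \<and> 1 \<le> r \<and> r \<le> mvc_kprime k + 1}"
      then show ?thesis using H2 by fastforce
    next
      assume "e \<in> {{U (j + 1) x, U (j + 2) x} |j x.
            j < \<kappa> \<and> 2 * m * j + 1 \<le> i \<and> i \<le> 2 * m * j + (2 * m + 1) \<and> 1 \<le> x \<and> x \<le> K}"
      then obtain j x where "e = {U (j + 1) x, U (j + 2) x}" "2 * m * j + 1 \<le> i" "i \<le> 2 * m * j + 2 * m + 1" "x \<in> {1..K}"
        by auto
      then show ?thesis using H3 by blast
    next
      assume "e \<in> {{Cv q, Cv (q + 1)} |q. even q \<and> 1 \<le> q \<and> q \<le> \<tau> - 1 \<and> (i = q \<or> i = q + 1)}"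
      then show ?thesis using H4 by blast
    next
      assume "e \<in> {{Cv i, y} |j p y.
            j < \<kappa> \<and> 1 \<le> p \<and> p \<le> m \<and> i = 2 * m * j + 2 * p \<and> (y = EdgeV p \<or> (\<exists>v\<in>es ! (p - 1). y = OrigV v))}"
      then obtain j p y where "e = {Cv i, y}" "1 \<le> p" "p \<le> m" "i = 2 * m * j + 2 * p"
         "y = EdgeV p \<or> (\<exists>v\<in>es ! (p - 1). y = OrigV v)" by blast
      then show ?thesis using H5 by blast
    qed
  qed
  have subV: "S i \<subseteq> mvc_vertices V es k" if "1 \<le> i" "i \<le> \<tau>" for i
  proof -
    have cc1: "1 \<le> cc i \<and> cc i \<le> \<tau>"
    proof (cases "sp i")
      case True
      then have "even i" by (rule sp_even)
      moreover have "odd \<tau>" using tau_eq by simp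
      ultimately have "i \<noteq> \<tau>" by auto
      then show ?thesis using True that unfolding cc_def by auto
    next
      case False then show ?thesis using that unfolding cc_def by auto
    qed
    have "Cv (cc i) \<in> mvc_vertices V es k"
      using cc1 unfolding mvc_vertices_def \<tau>_def by auto
    moreover have "OrigV ` C \<subseteq> mvc_vertices V es k"
      using C(1) unfolding mvc_vertices_def by auto
    moreover have "EdgeV ` f ` {1..K} \<subseteq> mvc_vertices V es k"
      using f unfolding mvc_vertices_def m_def by fastforce
    moreover have "(\<lambda>x. U (t x i) x) ` {1..K} \<subseteq> mvc_vertices V es k"
    proof
      fix y :: "'v mvc_vertex" assume "y \<in> (\<lambda>x. U (t x i) x) ` {1..K}"
      then obtain x where x: "x \<in> {1..K}" "y = U (t x i) x" by blast
      have "1 \<le> t x i" unfolding t_def by simp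
      then show "y \<in> mvc_vertices V es k"
        using T3[OF x(1) that] x unfolding mvc_vertices_def \<kappa>_def K_def by auto
    qed
    ultimately show ?thesis unfolding S_def by blast
  qed
  have cardS: "card (S i) \<le> mvc_kprime k" for i
  proof -
    have "card (S i) \<le> Suc (card (OrigV ` C \<union> EdgeV ` f ` {1..K} \<union> (\<lambda>x. U (t x i) x) ` {1..K}))"
    proof -
      have "finite (OrigV ` C \<union> EdgeV ` f ` {1..K} \<union> (\<lambda>x. U (t x i) x) ` {1..K})" using finC by simp
      then show ?thesis unfolding S_def by (simp add: card_insert_if)
    qed
    also have "\<dots> \<le> Suc (card (OrigV ` C) + card (EdgeV ` f ` {1..K} :: 'v mvc_vertex set) + card ((\<lambda>x. U (t x i) x) ` {1..K} :: 'v mvc_vertex set))"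
    proof -
      have gen: "\<And>a b c d e::nat. a \<le> b + c \<Longrightarrow> b \<le> d + e \<Longrightarrow> Suc a \<le> Suc (d + e + c)" by simp
      have u1: "card (OrigV ` C \<union> EdgeV ` f ` {1..K} \<union> (\<lambda>x. U (t x i) x) ` {1..K}) \<le> card (OrigV ` C \<union> EdgeV ` f ` {1..K}) + card ((\<lambda>x. U (t x i) x) ` {1..K} :: 'v mvc_vertex set)"
        by (rule card_Un_le)
      have u2: "card (OrigV ` C \<union> EdgeV ` f ` {1..K}) \<le> card (OrigV ` C) + card (EdgeV ` f ` {1..K} :: 'v mvc_vertex set)"
        by (rule card_Un_le)
      show ?thesis using gen[OF u1 u2] .
    qed
    also have "\<dots> \<le> Suc (k + K + K)"
    proof -
      have "card (OrigV ` C) \<le> k" using card_image_le[OF finC, of OrigV] C(2) by simp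
      moreover have "card (EdgeV ` f ` {1..K} :: 'v mvc_vertex set) \<le> K"
        by (metis card_atLeastAtMost card_image_le diff_Suc_1 finite_atLeastAtMost finite_imageI le_trans)
      moreover have "card ((\<lambda>x. U (t x i) x) ` {1..K} :: 'v mvc_vertex set) \<le> K"
        by (metis card_atLeastAtMost card_image_le diff_Suc_1 finite_atLeastAtMost)
      ultimately show ?thesis by simp
    qed
    finally show ?thesis unfolding mvc_kprime_def K_def by simp
  qed
  have card2: "card A \<le> 2" if "A \<subseteq> {a, b}" for A :: "'v mvc_vertex set" and a b
  proof -
    have "card A \<le> card {a, b}" using that by (intro card_mono) auto
    also have "\<dots> \<le> 2" by (cases "a = b") auto
    finally show ?thesis .
  qed
  have mov: "y \<in> S b"
    if "y \<in> S a" "y \<noteq> U (t x0 a) x0" "\<forall>x\<in>{1..K}. x \<noteq> x0 \<longrightarrow> t x b = t x a" "cc a = cc b"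
    for y a x0 b
  proof -
    have "y = Cv (cc a) \<or> y \<in> OrigV ` C \<union> EdgeV ` f ` {1..K} \<or> y \<in> (\<lambda>x. U (t x a) x) ` {1..K}"
      using that(1) unfolding S_def by blast
    then show ?thesis
    proof (elim disjE)
      assume "y \<in> (\<lambda>x. U (t x a) x) ` {1..K}"
      then obtain x where x: "x \<in> {1..K}" "y = U (t x a) x" by blast
      then have "x \<noteq> x0" using that(2) by auto
      then have "y = U (t x b) x" using x that(3) by simp
      then show ?thesis using inS_U[OF x(1)] by simp
    qed (use that(4) in \<open>auto simp: S_def\<close>)
  qed
  have diff: "card (sym_diff (S i) (S (Suc i))) \<le> 2" if "1 \<le> i" "i < \<tau>" for i
  proof (cases "sp i")
    case True
    then obtain x0 j where x0: "x0 \<in> {1..K}" "i = 2*m*j + 2*f x0" unfolding sp_def by blast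
    have same: "t x (Suc i) = t x i" if hx: "x \<in> {1..K}" "x \<noteq> x0" for x
    proof (rule ccontr)
      assume "t x (Suc i) \<noteq> t x i"
      then obtain j' where "i = 2*m*j' + 2*f x" using T4[OF hx(1) \<open>1 \<le> i\<close>] by blast
      then have "2*m*j' + 2*f x = 2*m*j + 2*f x0" using x0(2) by simp
      then have "f x = f x0" using uniq2[of m j' "f x" j "f x0"] f[OF x0(1)] f[OF hx(1)] by blast
      then show False using f0(2) hx x0(1) by (meson inj_onD)
    qed
    have "odd (Suc i)" using sp_even[OF True] by simp
    then have "\<not> sp (Suc i)" using sp_even by blast
    then have ccs: "cc i = Suc i" "cc (Suc i) = Suc i" using True unfolding cc_def by auto
    have "sym_diff (S i) (S (Suc i)) \<subseteq> {U (t x0 i) x0, U (t x0 (Suc i)) x0}"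
    proof
      fix y :: "'v mvc_vertex" assume y: "y \<in> sym_diff (S i) (S (Suc i))"
      show "y \<in> {U (t x0 i) x0, U (t x0 (Suc i)) x0}"
      proof (rule ccontr)
        assume ny: "y \<notin> {U (t x0 i) x0, U (t x0 (Suc i)) x0}"
        have "y \<in> S i \<longleftrightarrow> y \<in> S (Suc i)"
        proof
          assume "y \<in> S i"
          then show "y \<in> S (Suc i)"
            using mov[of y i x0 "Suc i"] ny same ccs by auto
        next
          assume "y \<in> S (Suc i)"
          then show "y \<in> S i"
            using mov[of y "Suc i" x0 i] ny same ccs by auto
        qed
        then show False using y unfolding sym_diff_def by auto
      qed
    qed
    then show ?thesis by (rule card2)
  next
    case False
    have same: "t x (Suc i) = t x i" if hx: "x \<in> {1..K}" for x
    proof (rule ccontr)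
      assume "t x (Suc i) \<noteq> t x i"
      then obtain j' where "i = 2*m*j' + 2*f x" using T4[OF hx(1) \<open>1 \<le> i\<close>] by blast
      then have "sp i" unfolding sp_def using hx by blast
      then show False using False by simp
    qed
    have "sym_diff (S i) (S (Suc i)) \<subseteq> {Cv (cc i), Cv (cc (Suc i))}"
      unfolding sym_diff_def S_def using same by auto
    then show ?thesis by (rule card2)
  qed
  show ?thesis unfolding multistage_vc_def
    apply (rule exI[of _ S])
    using cover subV cardS diff unfolding \<tau>_def by auto
qed

end
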